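(* Let $C$ be a parity complex. For all $M,P\subseteq C$ and $x\in C$, if $x^+$ moves $M$ to $P$ and $M$ is receptive, then $x^-$ moves $M$ to $P$.
   Context: A parity complex consists of a set $C=\bigsqcup_{n\ge 0}C_n$ graded by dimension, together with, for each $n\ge 0$ and each $x\in C_{n+1}$, two disjoint, non-empty, finite subsets $x^-,x^+\subseteq C_n$ (for $x\in C_0$ put $x^-=x^+=\emptyset$), subject to Axioms 1, 2, 3A, 3B below. Notation: for $S\subseteq C$, $S^-=\bigcup_{w\in S}w^-$, $S^+=\bigcup_{w\in S}w^+$, $S^\mp=S^-\setminus S^+$, $S^\pm=S^+\setminus S^-$; $x^{-+}=(x^-)^+$, etc. For $S,T\subseteq C$ write $S\perp T$ when $S^-\cap T^-=\emptyset$ and $S^+\cap T^+=\emptyset$; $x\perp y$ means $\{x\}\perp\{y\}$. With $S_n=S\cap C_n$, a set $S$ is well-formed when $S_0$ has at most one element and for every $n>0$ and all distinct $x,y\in S_n$, $x\perp y$. Write $x<y$ when $x^+\cap y^-\neq\emptyset$, and let $\lhd$ be the reflexive transitive closure of $<$. Axioms: (1) for all $x$, $x^{++}\cup x^{--}=x^{-+}\cup x^{+-}$; (2) for all $x$, $x^-$ and $x^+$ are well-formed; (3A) $x\lhd y$ and $y\lhd x$ imply $x=y$; (3B) if $x\lhd y$ then there is no $z$ with $x\in z^+$ and $y\in z^-$, and no $z$ with $y\in z^+$ and $x\in z^-$. For $S,M,P\subseteq C$, $S$ moves $M$ to $P$ when $M=(P\cup S^-)\setminus S^+$ and $P=(M\cup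 S^+)\setminus S^-$. A set $S\subseteq C$ is receptive when for all $x\in C$: if $x^{-+}\cap x^{++}\subseteq S$ and $S\cap x^{--}=\emptyset$ then $S\cap x^{+-}=\emptyset$; and if $x^{+-}\cap x^{--}\subseteq S$ and $S\cap x^{++}=\emptyset$ then $S\cap x^{-+}=\emptyset$. *)

theory Defs
  imports Main
begin

definition setm :: "('a \<Rightarrow> 'a set) \<Rightarrow> 'a set \<Rightarrow> 'a set" where
  "setm f S = \<Union> (f ` S)"

definition orth :: "('a \<Rightarrow> 'a set) \<Rightarrow> ('a \<Rightarrow> 'a set) \<Rightarrow> 'a set \<Rightarrow> 'a set \<Rightarrow> bool" where
  "orth mns pls S T \<longleftrightarrow> setm mns S \<inter> setm mns T = {} \<and> setm pls S \<inter> setm pls T = {}"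

definition well_formed ::
  "('a \<Rightarrow> nat) \<Rightarrow> ('a \<Rightarrow> 'a set) \<Rightarrow> ('a \<Rightarrow> 'a set) \<Rightarrow> 'a set \<Rightarrow> bool" where
  "well_formed dim mns pls S \<longleftrightarrow>
     (\<forall>x\<in>S. \<forall>y\<in>S. dim x = 0 \<longrightarrow> dim y = 0 \<longrightarrow> x = y) \<and>
     (\<forall>x\<in>S. \<forall>y\<in>S. dim x = dim y \<longrightarrow> dim x > 0 \<longrightarrow> x \<noteq> y \<longrightarrow> orth mns pls {x} {y})"

definition prec_rel :: "'a set \<Rightarrow> ('a \<Rightarrow> 'a set) \<Rightarrow> ('a \<Rightarrow> 'a set) \<Rightarrow> ('a \<times> 'a) set" where
  "prec_rel C mns pls = {(x, y). x \<in> C \<and> y \<in> C \<and> pls x \<inter> mns y \<noteq> {}}"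

definition parity_complex ::
  "'a set \<Rightarrow> ('a \<Rightarrow> nat) \<Rightarrow> ('a \<Rightarrow> 'a set) \<Rightarrow> ('a \<Rightarrow> 'a set) \<Rightarrow> bool" where
  "parity_complex C dim mns pls \<longleftrightarrow>
     (\<forall>x\<in>C. dim x = 0 \<longrightarrow> mns x = {} \<and> pls x = {}) \<and>
     (\<forall>x\<in>C. \<forall>n. dim x = Suc n \<longrightarrow>
         mns x \<subseteq> {y\<in>C. dim y = n} \<and> pls x \<subseteq> {y\<in>C. dim y = n} \<and>
         mns x \<inter> pls x = {} \<and> mns x \<noteq> {} \<and> pls x \<noteq> {} \<and>
         finite (mns x) \<and> finite (pls x)) \<and>
     \<comment> \<open>Axiom 1\<close>
     (\<forall>x\<in>C. setm pls (pls x) \<union> setm mns (mns x) = setm pls (mns x) \<union> setm mns (pls x)) \<and>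
     \<comment> \<open>Axiom 2\<close>
     (\<forall>x\<in>C. well_formed dim mns pls (mns x) \<and> well_formed dim mns pls (pls x)) \<and>
     \<comment> \<open>Axiom 3A\<close>
     (\<forall>x\<in>C. \<forall>y\<in>C. (x, y) \<in> (prec_rel C mns pls)\<^sup>* \<longrightarrow> (y, x) \<in> (prec_rel C mns pls)\<^sup>* \<longrightarrow> x = y) \<and>
     \<comment> \<open>Axiom 3B\<close>
     (\<forall>x\<in>C. \<forall>y\<in>C. (x, y) \<in> (prec_rel C mns pls)\<^sup>* \<longrightarrow>
         \<not> (\<exists>z\<in>C. x \<in> pls z \<and> y \<in> mns z) \<and> \<not> (\<exists>z\<in>C. y \<in> pls z \<and> x \<in> mns z))"

definition moves :: "('a \<Rightarrow> 'a set) \<Rightarrow> ('a \<Rightarrow> 'a set) \<Rightarrow> 'a set \<Rightarrow> 'a set \<Rightarrow> 'a set \<Rightarrow> bool" where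
  "moves mns pls S M P \<longleftrightarrow>
     M = (P \<union> setm mns S) - setm pls S \<and> P = (M \<union> setm pls S) - setm mns S"

definition receptive :: "'a set \<Rightarrow> ('a \<Rightarrow> 'a set) \<Rightarrow> ('a \<Rightarrow> 'a set) \<Rightarrow> 'a set \<Rightarrow> bool" where
  "receptive C mns pls S \<longleftrightarrow>
     (\<forall>x\<in>C.
       (setm pls (mns x) \<inter> setm pls (pls x) \<subseteq> S \<and> S \<inter> setm mns (mns x) = {}
          \<longrightarrow> S \<inter> setm mns (pls x) = {}) \<and>
       (setm mns (pls x) \<inter> setm mns (mns x) \<subseteq> S \<and> S \<inter> setm pls (pls x) = {}
          \<longrightarrow> S \<inter> setm pls (mns x) = {}))"

end

theory Submission
  imports Defs
begin

theorem lemma3p1: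
  fixes C :: "'a set" and dim :: "'a \<Rightarrow> nat" and mns pls :: "'a \<Rightarrow> 'a set"
    and M P :: "'a set" and x :: 'a
  assumes "parity_complex C dim mns pls"
    and "M \<subseteq> C" and "P \<subseteq> C" and "x \<in> C"
    and "moves mns pls (pls x) M P"
    and "receptive C mns pls M"
  shows "moves mns pls (mns x) M P"
proof -
  note pc = assms(1)[unfolded parity_complex_def]
  have subC: "pls x \<subseteq> C \<and> mns x \<subseteq> C"
  proof (cases "dim x")
    case 0 then show ?thesis using pc assms(4) by auto
  next
    case (Suc n) then show ?thesis using pc assms(4) by blast
  qed
  define A where "A = setm pls (pls x)"
  define B where "B = setm mns (pls x)"
  define D where "D = setm pls (mns x)"
  define E where "E = setm mns (mns x)"
  have ax1: "A \<union> E = D \<union> B" using pc assms(4) unfolding A_def B_def D_def E_def by blast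
  have AE: "A \<inter> E = {}"
  proof (rule ccontr)
    assume "A \<inter> E \<noteq> {}"
    then obtain u w v where w: "w \<in> pls x" "u \<in> pls w" and v: "v \<in> mns x" "u \<in> mns v"
      unfolding A_def E_def setm_def by blast
    have wC: "w \<in> C" and vC: "v \<in> C" using subC w v by auto
    have "(w, v) \<in> prec_rel C mns pls" using w v wC vC unfolding prec_rel_def by blast
    hence "(w, v) \<in> (prec_rel C mns pls)\<^sup>*" by blast
    then show False using pc wC vC assms(4) w v by blast
  qed
  have BD: "B \<inter> D = {}"
  proof (rule ccontr)
    assume "B \<inter> D \<noteq> {}"
    then obtain u w v where w: "w \<in> pls x" "u \<in> mns w" and v: "v \<in> mns x" "u \<in> pls v"
      unfolding B_def D_def setm_def by blast
    have wC: "w \<in> C" and vC: "v \<in> C" using subC w v by auto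
    have "(v, w) \<in> prec_rel C mns pls" using w v wC vC unfolding prec_rel_def by blast
    hence "(v, w) \<in> (prec_rel C mns pls)\<^sup>*" by blast
    then show False using pc wC vC assms(4) w v by blast
  qed
  have mv1: "M = (P \<union> B) - A \<and> P = (M \<union> A) - B"
    using assms(5) unfolding moves_def A_def B_def .
  have mv: "M = (P \<union> B) - A" "P = (M \<union> A) - B" using mv1 by (rule conjunct1, rule conjunct2)
  have MD: "M \<inter> D = {}"
  proof -
    have "B \<inter> E \<subseteq> M \<and> M \<inter> A = {} \<longrightarrow> M \<inter> D = {}"
    proof -
      have "\<forall>y\<in>C. (setm mns (pls y) \<inter> setm mns (mns y) \<subseteq> M \<and> M \<inter> setm pls (pls y) = {}
          \<longrightarrow> M \<inter> setm pls (mns y) = {})"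
        using assms(6) unfolding receptive_def by simp
      then have "setm mns (pls x) \<inter> setm mns (mns x) \<subseteq> M \<and> M \<inter> setm pls (pls x) = {}
          \<longrightarrow> M \<inter> setm pls (mns x) = {}" using assms(4) by (rule bspec)
      then show ?thesis unfolding A_def B_def D_def E_def .
    qed
    moreover have "B \<inter> E \<subseteq> M" using mv AE by blast
    moreover have "M \<inter> A = {}" using mv by blast
    ultimately show ?thesis by blast
  qed
  have "M = (P \<union> E) - D \<and> P = (M \<union> D) - E"
    using mv ax1 AE BD MD by blast
  then show ?thesis unfolding moves_def D_def E_def .
qed

end
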